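(* Let $(E,d)$ be a Polish space and $\mu\in(0,1)$. For any $f\in D^{\mu}([0,1],E)$, \[ [f]_{\wedge\mu}\le[f]_{\mu}\le 2[f]_{\sim\mu}\le\frac{2}{1-2^{-\mu}}[f]_{\wedge\mu}. \]
   Context: $D([0,1],E)$ is the space of càdlàg $E$-valued functions on $[0,1]$. For $0\le s\le t\le u\le 1$, $\Delta(f;s,t,u)=d(f(s),f(t))\wedge d(f(t),f(u))$, and $[f]_\mu=\sup_{0\le s\le t\le u\le 1}\frac{\Delta(f;s,t,u)}{|u-s|^\mu}$. $D^{\mu}([0,1],E)$ is the set of $f\in D([0,1],E)$ with $[f]_\mu+\sup_{t\in(0,1]}\frac{d(f(0),f(t))}{t^\mu}+\sup_{t\in[0,1)}\frac{d(f(1),f(t))}{|1-t|^\mu}<\infty$. For $0\le\sigma<\tau\le1$, $N(f;(\sigma,\tau))=\inf_{\sigma<\theta\le\tau}\sup_{s\in[\sigma,\theta),\,u\in[\theta,\tau]}\left[d(f(\sigma),f(s))\vee d(f(u),f(\tau))\right]$; for $\eta>0$, $N(f;\eta)=\sup_{0\le\sigma<\tau\le 1,\ \tau-\sigma\le\eta}N(f;(\sigma,\tau))$; $[f]_{\sim\mu}=\sup_{\eta>0}\frac{N(f;\eta)}{\eta^\mu}$. Finally $[f]_{\wedge\mu}=\sup_{0<s<u\le 1}\frac{\Delta\left(f;s,\frac{s+u}{2},u\right)}{|u-s|^{\mu}}$. *)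

theory Defs
  imports "HOL-Analysis.Analysis"
begin

text \<open>Cadlag functions on [0,1]: right-continuous on [0,1), left limits on (0,1].
  Only the values on [0,1] are relevant.\<close>
definition cadlag :: "(real \<Rightarrow> 'a::metric_space) \<Rightarrow> bool" where
  "cadlag f \<longleftrightarrow> (\<forall>t\<in>{0..<1}. continuous (at_right t) f) \<and>
                  (\<forall>t\<in>{0<..1}. \<exists>l. (f \<longlongrightarrow> l) (at_left t))"

definition Delta :: "(real \<Rightarrow> 'a::metric_space) \<Rightarrow> real \<Rightarrow> real \<Rightarrow> real \<Rightarrow> real" where
  "Delta f s t u = min (dist (f s) (f t)) (dist (f t) (f u))"

definition holder_semi :: "real \<Rightarrow> (real \<Rightarrow> 'a::metric_space) \<Rightarrow> ereal" where
  "holder_semi \<mu> f = (SUP (s,t,u)\<in>{(s,t,u). 0 \<le> s \<and> s \<le> t \<and> t \<le> u \<and> u \<le> 1 \<and> s < u}.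
      ereal (Delta f s t u / (u - s) powr \<mu>))"

definition holder_D :: "real \<Rightarrow> (real \<Rightarrow> 'a::metric_space) set" where
  "holder_D \<mu> = {f. cadlag f \<and> holder_semi \<mu> f < \<infinity>
      \<and> (SUP t\<in>{0<..1}. ereal (dist (f 0) (f t) / t powr \<mu>)) < \<infinity>
      \<and> (SUP t\<in>{0..<1}. ereal (dist (f 1) (f t) / \<bar>1 - t\<bar> powr \<mu>)) < \<infinity>}"

definition Nint :: "(real \<Rightarrow> 'a::metric_space) \<Rightarrow> real \<Rightarrow> real \<Rightarrow> ereal" where
  "Nint f \<sigma> \<tau> = (INF \<theta>\<in>{\<sigma><..\<tau>}. SUP (s,u)\<in>{\<sigma>..<\<theta>} \<times> {\<theta>..\<tau>}.
      ereal (max (dist (f \<sigma>) (f s)) (dist (f u) (f \<tau>))))"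

definition Neta :: "(real \<Rightarrow> 'a::metric_space) \<Rightarrow> real \<Rightarrow> ereal" where
  "Neta f \<eta> = (SUP (\<sigma>,\<tau>)\<in>{(\<sigma>,\<tau>). 0 \<le> \<sigma> \<and> \<sigma> < \<tau> \<and> \<tau> \<le> 1 \<and> \<tau> - \<sigma> \<le> \<eta>}. Nint f \<sigma> \<tau>)"

definition tilde_semi :: "real \<Rightarrow> (real \<Rightarrow> 'a::metric_space) \<Rightarrow> ereal" where
  "tilde_semi \<mu> f = (SUP \<eta>\<in>{0<..}. Neta f \<eta> / ereal (\<eta> powr \<mu>))"

definition wedge_semi :: "real \<Rightarrow> (real \<Rightarrow> 'a::metric_space) \<Rightarrow> ereal" where
  "wedge_semi \<mu> f = (SUP (s,u)\<in>{(s,u). 0 < s \<and> s < u \<and> u \<le> 1}.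
      ereal (Delta f s ((s + u) / 2) u / (u - s) powr \<mu>))"

end

theory Submission imports Defs begin

definition SS :: "real \<Rightarrow> real \<Rightarrow> real \<Rightarrow> real" where
  "SS \<mu> w l = w * l powr \<mu> / (1 - 2 powr (-\<mu>))"

lemma two_powr_lt: "0 < \<mu> \<Longrightarrow> 2 powr (-\<mu>) < (1::real)"
  by (simp add: powr_minus_divide)

lemma SS_nonneg: "0 < \<mu> \<Longrightarrow> 0 \<le> w \<Longrightarrow> 0 \<le> SS \<mu> w l"
  unfolding SS_def using two_powr_lt[of \<mu>] by simp

lemma SS_mono: "0 < \<mu> \<Longrightarrow> 0 \<le> w \<Longrightarrow> 0 \<le> l \<Longrightarrow> l \<le> l' \<Longrightarrow> SS \<mu> w l \<le> SS \<mu> w l'"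
  unfolding SS_def using two_powr_lt[of \<mu>]
  by (intro divide_right_mono mult_left_mono powr_mono2) auto

lemma SS_split: assumes "0 < \<mu>" "0 < l"
  shows "SS \<mu> w l = w * l powr \<mu> + SS \<mu> w (l/2)"
proof -
  define p where "p = 2 powr \<mu>"
  have p1: "p > 1" unfolding p_def using assms by simp
  have m: "2 powr (-\<mu>) = 1/p" unfolding p_def by (simp add: powr_minus_divide)
  have h: "(l/2) powr \<mu> = l powr \<mu> / p" unfolding p_def using assms by (simp add: powr_divide)
  show ?thesis unfolding SS_def m h using p1 by (simp add: field_simps)
qed

lemma rc_eps:
  fixes f :: "real \<Rightarrow> 'a::metric_space"
  assumes "continuous (at_right x) f" "0 < e"
  shows "\<exists>d>0. \<forall>y. x < y \<and> y < x + d \<longrightarrow> dist (f y) (f x) < e"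
proof -
  have "(f \<longlongrightarrow> f x) (at_right x)" using assms(1) by (simp add: continuous_within)
  then have "eventually (\<lambda>y. dist (f y) (f x) < e) (at_right x)" using tendstoD assms(2) by blast
  then obtain b where "b > x" "\<forall>y>x. y < b \<longrightarrow> dist (f y) (f x) < e"
    by (auto simp: eventually_at_right_field)
  then show ?thesis by (intro exI[of _ "b - x"]) auto
qed

lemma pow_small: assumes "0 < d" "0 < (L::real)" shows "\<exists>n. L / 2^n < d"
proof -
  obtain n where "(1/2::real)^n < d / L" using real_arch_pow_inv[of "d/L" "1/2"] assms by auto
  then have "L * (1/2)^n < d" using assms by (simp add: field_simps)
  then show ?thesis by (auto simp: power_one_over field_simps)
qed

context
  fixes f :: "real \<Rightarrow> 'a::metric_space" and \<mu> w :: real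
  assumes rc: "\<forall>t\<in>{0..<1}. continuous (at_right t) f"
    and mid: "\<And>a b. 0 \<le> a \<Longrightarrow> a < b \<Longrightarrow> b \<le> 1 \<Longrightarrow> Delta f a ((a+b)/2) b \<le> w * (b-a) powr \<mu>"
    and mu: "0 < \<mu>" and w0: "0 \<le> w"
begin

lemma mid_close:
  assumes "0 \<le> a" "a < b" "b \<le> 1" "dist (f a) z \<le> c" "dist (f b) z \<le> c"
  shows "dist (f ((a+b)/2)) z \<le> c + w * (b-a) powr \<mu>"
proof -
  have "min (dist (f a) (f ((a+b)/2))) (dist (f ((a+b)/2)) (f b)) \<le> w * (b-a) powr \<mu>"
    using mid[OF assms(1-3)] by (simp add: Delta_def)
  moreover have "dist (f ((a+b)/2)) z \<le> dist (f ((a+b)/2)) (f a) + dist (f a) z"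
    by (rule dist_triangle)
  moreover have "dist (f ((a+b)/2)) z \<le> dist (f ((a+b)/2)) (f b) + dist (f b) z"
    by (rule dist_triangle)
  ultimately show ?thesis using assms(4,5) by (auto simp: dist_commute min_def split: if_splits)
qed

lemma Zn:
  assumes "0 \<le> a" "a < b" "b \<le> 1" "dist (f a) z \<le> c" "dist (f b) z \<le> c" "a \<le> x" "x < b"
  shows "\<exists>y. x < y \<and> y \<le> x + (b-a)/2^n \<and> y \<le> b \<and> dist (f y) z \<le> c + SS \<mu> w (b-a)"
  using assms
proof (induction n arbitrary: a b c)
  case 0
  then show ?case using SS_nonneg[OF mu w0, of "b-a"] by (intro exI[of _ b]) auto
next
  case (Suc n)
  define m where "m = (a+b)/2"
  define c' where "c' = c + w * (b-a) powr \<mu>"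
  have dm: "dist (f m) z \<le> c'" unfolding m_def c'_def using mid_close Suc.prems by blast
  have cc: "c \<le> c'" unfolding c'_def using w0 by simp
  have sp: "SS \<mu> w (b-a) = w * (b-a) powr \<mu> + SS \<mu> w ((b-a)/2)" using SS_split[OF mu, of "b-a"] Suc.prems by simp
  show ?case
  proof (cases "x < m")
    case True
    from Suc.IH[of a m c'] Suc.prems True dm cc obtain y where
      y: "x < y" "y \<le> x + (m-a)/2^n" "y \<le> m" "dist (f y) z \<le> c' + SS \<mu> w (m-a)"
      unfolding m_def by fastforce
    have "m - a = (b-a)/2" unfolding m_def by (simp add: field_simps)
    then show ?thesis using y sp Suc.prems unfolding c'_def by (intro exI[of _ y]) (auto simp: m_def field_simps)
  next
    case False
    from Suc.IH[of m b c'] Suc.prems False dm cc obtain y where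
      y: "x < y" "y \<le> x + (b-m)/2^n" "y \<le> b" "dist (f y) z \<le> c' + SS \<mu> w (b-m)"
      unfolding m_def by fastforce
    have "b - m = (b-a)/2" unfolding m_def by (simp add: field_simps)
    then show ?thesis using y sp unfolding c'_def by (intro exI[of _ y]) (auto simp: m_def field_simps)
  qed
qed

lemma Zall:
  assumes "0 \<le> a" "a < b" "b \<le> 1" "dist (f a) z \<le> c" "dist (f b) z \<le> c" "a \<le> x" "x \<le> b"
  shows "dist (f x) z \<le> c + SS \<mu> w (b-a)"
proof (cases "x = b")
  case True
  then show ?thesis using assms SS_nonneg[OF mu w0, of "b-a"] by simp
next
  case False
  then have xb: "x < b" using assms by simp
  show ?thesis
  proof (rule field_le_epsilon)
    fix e :: real assume e: "0 < e"
    have "continuous (at_right x) f" using rc assms xb by auto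
    then obtain d where d: "d > 0" "\<forall>y. x < y \<and> y < x + d \<longrightarrow> dist (f y) (f x) < e"
      using rc_eps e by blast
    obtain n where n: "(b-a)/2^n < d" using pow_small[OF d(1), of "b-a"] assms by auto
    obtain y where y: "x < y" "y \<le> x + (b-a)/2^n" "dist (f y) z \<le> c + SS \<mu> w (b-a)"
      using Zn[OF assms(1-6) xb, of n] by blast
    have "dist (f x) z \<le> dist (f x) (f y) + dist (f y) z" by (rule dist_triangle)
    also have "dist (f x) (f y) < e" using d(2)[rule_format, of y] y n by (simp add: dist_commute)
    finally show "dist (f x) z \<le> c + SS \<mu> w (b-a) + e" using y by simp
  qed
qed

end

primrec pth :: "(real \<Rightarrow> 'a::metric_space) \<Rightarrow> real \<Rightarrow> real \<Rightarrow> real \<Rightarrow> real \<Rightarrow> nat \<Rightarrow> real \<times> real" where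
  "pth f \<mu> w \<sigma> \<tau> 0 = (\<sigma>, \<tau>)"
| "pth f \<mu> w \<sigma> \<tau> (Suc n) = (case pth f \<mu> w \<sigma> \<tau> n of (a, b) \<Rightarrow>
     if dist (f a) (f ((a+b)/2)) \<le> w * (b-a) powr \<mu> then ((a+b)/2, b) else (a, (a+b)/2))"

context
  fixes f :: "real \<Rightarrow> 'a::metric_space" and \<mu> w \<sigma> \<tau> :: real
  assumes rc: "\<forall>t\<in>{0..<1}. continuous (at_right t) f"
    and mid: "\<And>a b. 0 \<le> a \<Longrightarrow> a < b \<Longrightarrow> b \<le> 1 \<Longrightarrow> Delta f a ((a+b)/2) b \<le> w * (b-a) powr \<mu>"
    and mu: "0 < \<mu>" and w0: "0 \<le> w"
    and st: "0 \<le> \<sigma>" "\<sigma> < \<tau>" "\<tau> \<le> 1"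
begin

lemma pth_inv:
  assumes "pth f \<mu> w \<sigma> \<tau> n = (a, b)"
  shows "\<sigma> \<le> a \<and> b \<le> \<tau> \<and> b - a = (\<tau> - \<sigma>) / 2^n
    \<and> dist (f a) (f \<sigma>) \<le> SS \<mu> w (\<tau> - \<sigma>) - SS \<mu> w (b - a)
    \<and> dist (f b) (f \<tau>) \<le> SS \<mu> w (\<tau> - \<sigma>) - SS \<mu> w (b - a)
    \<and> (\<forall>s. \<sigma> \<le> s \<and> s \<le> a \<longrightarrow> dist (f s) (f \<sigma>) \<le> SS \<mu> w (\<tau> - \<sigma>))
    \<and> (\<forall>u. b \<le> u \<and> u \<le> \<tau> \<longrightarrow> dist (f u) (f \<tau>) \<le> SS \<mu> w (\<tau> - \<sigma>))"
  using assms
proof (induction n arbitrary: a b)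
  case 0
  then show ?case using SS_nonneg[OF mu w0, of "\<tau>-\<sigma>"] by auto
next
  case (Suc n)
  obtain a0 b0 where ab0: "pth f \<mu> w \<sigma> \<tau> n = (a0, b0)" by fastforce
  note IH = Suc.IH[OF ab0]
  define K where "K = SS \<mu> w (\<tau> - \<sigma>)"
  define m where "m = (a0+b0)/2"
  have pos: "0 < (\<tau> - \<sigma>) / 2^n" using st by simp
  have ab: "a0 < b0" using IH pos by linarith
  have a0p: "0 \<le> a0" "b0 \<le> 1" using IH st by auto
  have l2: "b0 - m = (b0 - a0)/2" "m - a0 = (b0 - a0)/2" unfolding m_def by (simp_all add: field_simps)
  have sp: "SS \<mu> w (b0-a0) = w * (b0-a0) powr \<mu> + SS \<mu> w ((b0-a0)/2)"
    using SS_split[OF mu, of "b0-a0"] ab by simp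
  have smono: "SS \<mu> w ((b0-a0)/2) \<le> SS \<mu> w (b0-a0)"
    using SS_mono[OF mu w0] ab by simp
  have mm: "min (dist (f a0) (f m)) (dist (f m) (f b0)) \<le> w * (b0-a0) powr \<mu>"
    using mid[OF a0p(1) ab a0p(2)] by (simp add: Delta_def m_def)
  show ?case
  proof (cases "dist (f a0) (f m) \<le> w * (b0-a0) powr \<mu>")
    case True
    then have e: "a = m" "b = b0" using Suc.prems ab0 by (auto simp: m_def)
    have dm: "dist (f m) (f \<sigma>) \<le> K - SS \<mu> w ((b0-a0)/2)"
    proof -
      have t: "dist (f m) (f \<sigma>) \<le> dist (f m) (f a0) + dist (f a0) (f \<sigma>)" by (rule dist_triangle)
      have i1: "dist (f a0) (f \<sigma>) \<le> K - SS \<mu> w (b0-a0)" using IH unfolding K_def by blast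
      have "dist (f m) (f a0) \<le> w*(b0-a0) powr \<mu>" using True by (simp add: dist_commute)
      then show ?thesis using t i1 sp by linarith
    qed
    have left: "\<forall>s. \<sigma> \<le> s \<and> s \<le> m \<longrightarrow> dist (f s) (f \<sigma>) \<le> K"
    proof (intro allI impI)
      fix s assume s: "\<sigma> \<le> s \<and> s \<le> m"
      show "dist (f s) (f \<sigma>) \<le> K"
      proof (cases "s \<le> a0")
        case True then show ?thesis using IH s unfolding K_def by blast
      next
        case False
        have "dist (f s) (f \<sigma>) \<le> (K - SS \<mu> w ((b0-a0)/2)) + SS \<mu> w (m - a0)"
          apply (rule Zall[OF rc mid mu w0])
          using a0p ab dm IH smono False s by (auto simp: m_def K_def)
        then show ?thesis using l2 by simp
      qed
    qed
    have sm: "\<sigma> \<le> m" using IH ab unfolding m_def by (simp add: field_simps)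
    have eqn: "(b0-a0)/2 = (\<tau>-\<sigma>)/2^Suc n" using IH by simp
    have i2: "dist (f b0) (f \<tau>) \<le> K - SS \<mu> w (b0-a0)" using IH unfolding K_def by blast
    show ?thesis unfolding e l2(1) eqn[symmetric] K_def[symmetric]
      using IH sm dm smono left i2 by (auto simp: K_def)
  next
    case False
    then have e: "a = a0" "b = m" using Suc.prems ab0 by (auto simp: m_def)
    have F: "dist (f m) (f b0) \<le> w * (b0-a0) powr \<mu>" using False mm by simp
    have dm: "dist (f m) (f \<tau>) \<le> K - SS \<mu> w ((b0-a0)/2)"
    proof -
      have t: "dist (f m) (f \<tau>) \<le> dist (f m) (f b0) + dist (f b0) (f \<tau>)" by (rule dist_triangle)
      have i1: "dist (f b0) (f \<tau>) \<le> K - SS \<mu> w (b0-a0)" using IH unfolding K_def by blast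
      show ?thesis using t i1 sp F by linarith
    qed
    have right: "\<forall>u. m \<le> u \<and> u \<le> \<tau> \<longrightarrow> dist (f u) (f \<tau>) \<le> K"
    proof (intro allI impI)
      fix u assume u: "m \<le> u \<and> u \<le> \<tau>"
      show "dist (f u) (f \<tau>) \<le> K"
      proof (cases "b0 \<le> u")
        case True then show ?thesis using IH u unfolding K_def by blast
      next
        case False
        have "dist (f u) (f \<tau>) \<le> (K - SS \<mu> w ((b0-a0)/2)) + SS \<mu> w (b0 - m)"
          apply (rule Zall[OF rc mid mu w0])
          using a0p ab dm IH smono False u by (auto simp: m_def K_def)
        then show ?thesis using l2 by simp
      qed
    qed
    have sm: "m \<le> \<tau>" using IH ab unfolding m_def by (simp add: field_simps)
    have eqn: "(b0-a0)/2 = (\<tau>-\<sigma>)/2^Suc n" using IH by simp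
    have i2: "dist (f a0) (f \<sigma>) \<le> K - SS \<mu> w (b0-a0)" using IH unfolding K_def by blast
    show ?thesis unfolding e l2(2) eqn[symmetric] K_def[symmetric]
      using IH sm dm smono right i2 by (auto simp: K_def)
  qed
qed

lemma pth_step:
  "fst (pth f \<mu> w \<sigma> \<tau> n) \<le> fst (pth f \<mu> w \<sigma> \<tau> (Suc n)) \<and>
   snd (pth f \<mu> w \<sigma> \<tau> (Suc n)) \<le> snd (pth f \<mu> w \<sigma> \<tau> n) \<and>
   fst (pth f \<mu> w \<sigma> \<tau> n) < snd (pth f \<mu> w \<sigma> \<tau> n)"
proof -
  obtain a0 b0 where ab0: "pth f \<mu> w \<sigma> \<tau> n = (a0, b0)" by fastforce
  have "b0 - a0 = (\<tau> - \<sigma>) / 2^n" using pth_inv[OF ab0] by blast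
  moreover have "0 < (\<tau> - \<sigma>) / 2^n" using st by simp
  ultimately have "a0 < b0" by linarith
  then show ?thesis using ab0 by (auto simp: field_simps)
qed

lemma Nint_bound: "Nint f \<sigma> \<tau> \<le> ereal (SS \<mu> w (\<tau> - \<sigma>))"
proof -
  define K where "K = SS \<mu> w (\<tau> - \<sigma>)"
  define A where "A n = fst (pth f \<mu> w \<sigma> \<tau> n)" for n
  define B where "B n = snd (pth f \<mu> w \<sigma> \<tau> n)" for n
  have K0: "0 \<le> K" unfolding K_def using SS_nonneg[OF mu w0] .
  have inv: "\<sigma> \<le> A n \<and> B n \<le> \<tau> \<and> B n - A n = (\<tau> - \<sigma>) / 2^n
    \<and> (\<forall>s. \<sigma> \<le> s \<and> s \<le> A n \<longrightarrow> dist (f s) (f \<sigma>) \<le> K)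
    \<and> (\<forall>u. B n \<le> u \<and> u \<le> \<tau> \<longrightarrow> dist (f u) (f \<tau>) \<le> K)" for n
    using pth_inv[of n "A n" "B n"] unfolding A_def B_def K_def by auto
  have inc: "incseq A" unfolding A_def using pth_step by (intro incseq_SucI) blast
  have dec: "decseq B" unfolding B_def using pth_step by (intro decseq_SucI) blast
  have AB: "A n < B n" for n unfolding A_def B_def using pth_step by blast
  have AB2: "A n \<le> B k" for n k
  proof -
    have "A n \<le> A (max n k)" using inc by (simp add: incseq_def)
    also have "\<dots> < B (max n k)" by (rule AB)
    also have "\<dots> \<le> B k" using dec by (simp add: decseq_def)
    finally show ?thesis by simp
  qed
  define \<theta> where "\<theta> = Sup (range A)"
  have bdd: "bdd_above (range A)" using AB2 by (intro bdd_aboveI[of _ "B 0"]) auto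
  have At: "A n \<le> \<theta>" for n unfolding \<theta>_def using bdd by (intro cSup_upper) auto
  have tB: "\<theta> \<le> B n" for n unfolding \<theta>_def using AB2 by (intro cSup_least) auto
  have A0: "A 0 = \<sigma>" "B 0 = \<tau>" unfolding A_def B_def by simp_all
  have st\<theta>: "\<sigma> \<le> \<theta>" "\<theta> \<le> \<tau>" using At[of 0] tB[of 0] A0 by auto
  have goodL: "dist (f s) (f \<sigma>) \<le> K" if s12: "\<sigma> \<le> s" "s < \<theta>" for s
  proof -
    obtain n where "s < A n" using s12(2) bdd unfolding \<theta>_def by (auto simp: less_cSup_iff)
    then show ?thesis using inv[of n] s12 by auto
  qed
  have goodR: "dist (f u) (f \<tau>) \<le> K" if "\<theta> \<le> u" "u \<le> \<tau>" for u
  proof (cases "\<theta> < u")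
    case True
    obtain n where n: "(\<tau> - \<sigma>)/2^n < u - \<theta>" using pow_small[of "u - \<theta>" "\<tau> - \<sigma>"] True st by auto
    have "B n < u" using inv[of n] At[of n] n by linarith
    then show ?thesis using inv[of n] that by auto
  next
    case False
    then have u: "u = \<theta>" using that by simp
    show ?thesis
    proof (cases "\<theta> = \<tau>")
      case True then show ?thesis using u K0 by simp
    next
      case False
      then have t1: "\<theta> \<in> {0..<1}" using st\<theta> st by auto
      show ?thesis
      proof (rule field_le_epsilon)
        fix e :: real assume e: "0 < e"
        obtain d where d: "d > 0" "\<forall>y. \<theta> < y \<and> y < \<theta> + d \<longrightarrow> dist (f y) (f \<theta>) < e"
          using rc_eps[of \<theta> f e] rc t1 e by blast
        obtain n where n: "(\<tau> - \<sigma>)/2^n < d" using pow_small[OF d(1), of "\<tau> - \<sigma>"] st by auto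
        have bn: "B n < \<theta> + d" using inv[of n] At[of n] n by linarith
        show "dist (f u) (f \<tau>) \<le> K + e"
        proof (cases "B n = \<theta>")
          case True then show ?thesis using inv[of n] u e st\<theta> by auto
        next
          case False
          then have "\<theta> < B n" using tB[of n] by simp
          then have "dist (f (B n)) (f \<theta>) < e" using d(2) bn by blast
          moreover have "dist (f \<theta>) (f \<tau>) \<le> dist (f \<theta>) (f (B n)) + dist (f (B n)) (f \<tau>)"
            by (rule dist_triangle)
          moreover have "dist (f (B n)) (f \<tau>) \<le> K" using inv[of n] by auto
          ultimately show ?thesis using u by (simp add: dist_commute)
        qed
      qed
    qed
  qed
  have main: "Nint f \<sigma> \<tau> \<le> ereal (K + e)" if e: "0 \<le> e"
    and th: "\<theta>' \<in> {\<sigma><..\<tau>}" "\<And>s. \<sigma> \<le> s \<Longrightarrow> s < \<theta>' \<Longrightarrow> dist (f \<sigma>) (f s) \<le> K + e"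
            "\<And>u. \<theta>' \<le> u \<Longrightarrow> u \<le> \<tau> \<Longrightarrow> dist (f u) (f \<tau>) \<le> K + e" for e \<theta>'
    unfolding Nint_def
  proof (rule INF_lower2[OF th(1)])
    show "(SUP (s, u)\<in>{\<sigma>..<\<theta>'} \<times> {\<theta>'..\<tau>}. ereal (max (dist (f \<sigma>) (f s)) (dist (f u) (f \<tau>)))) \<le> ereal (K + e)"
      using th by (intro SUP_least) auto
  qed
  show ?thesis
  proof (cases "\<sigma> < \<theta>")
    case True
    have "Nint f \<sigma> \<tau> \<le> ereal (K + 0)"
      by (rule main) (use True st\<theta> goodL goodR in \<open>auto simp: dist_commute\<close>)
    then show ?thesis unfolding K_def by simp
  next
    case False
    then have t: "\<theta> = \<sigma>" using st\<theta> by simp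
    show ?thesis unfolding K_def[symmetric]
    proof (rule ereal_le_epsilon2)
      fix e :: real assume e: "0 < e"
      have s1: "\<sigma> \<in> {0..<1}" using st by auto
      obtain d where d: "d > 0" "\<forall>y. \<sigma> < y \<and> y < \<sigma> + d \<longrightarrow> dist (f y) (f \<sigma>) < e"
        using rc_eps[of \<sigma> f e] rc s1 e by blast
      have "Nint f \<sigma> \<tau> \<le> ereal (K + e)"
      proof (rule main[of e "min \<tau> (\<sigma> + d/2)"])
        show "0 \<le> e" using e by simp
        show "min \<tau> (\<sigma> + d/2) \<in> {\<sigma><..\<tau>}" using st d by auto
        show "dist (f \<sigma>) (f s) \<le> K + e" if "\<sigma> \<le> s" "s < min \<tau> (\<sigma> + d/2)" for s
        proof (cases "s = \<sigma>")
          case True then show ?thesis using K0 e by simp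
        next
          case False
          then have "dist (f s) (f \<sigma>) < e" using d(2) that by auto
          then show ?thesis using K0 by (simp add: dist_commute)
        qed
        show "dist (f u) (f \<tau>) \<le> K + e" if "min \<tau> (\<sigma> + d/2) \<le> u" "u \<le> \<tau>" for u
        proof -
          have "\<sigma> \<le> u" using that st d by (auto simp: min_def split: if_splits)
          then have "dist (f u) (f \<tau>) \<le> K" using goodR[of u] that t by simp
          then show ?thesis using e by simp
        qed
      qed
      then show "Nint f \<sigma> \<tau> \<le> ereal K + ereal e" by simp
    qed
  qed
qed

end

lemma mid0:
  fixes f :: "real \<Rightarrow> 'a::metric_space"
  assumes rc: "\<forall>t\<in>{0..<1}. continuous (at_right t) f"
    and midp: "\<And>a b. 0 < a \<Longrightarrow> a < b \<Longrightarrow> b \<le> 1 \<Longrightarrow> Delta f a ((a+b)/2) b \<le> w * (b-a) powr \<mu>"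
    and b: "0 < b" "b \<le> 1"
  shows "Delta f 0 ((0+b)/2) b \<le> w * (b-0) powr \<mu>"
proof (rule tendsto_le[of "at_right (0::real)"])
  show "at_right (0::real) \<noteq> bot" by simp
  have bb: "((\<lambda>s. b - s) \<longlongrightarrow> b) (at_right (0::real))"
    by (rule tendsto_eq_intros) (auto intro!: tendsto_eq_intros)
  show "((\<lambda>s. w * (b - s) powr \<mu>) \<longlongrightarrow> w * (b - 0) powr \<mu>) (at_right 0)"
    using bb b by (auto intro!: tendsto_intros)
  have h1: "(f \<longlongrightarrow> f 0) (at_right 0)" using rc by (simp add: continuous_within)
  have h2': "(f \<longlongrightarrow> f (b/2)) (at_right (b/2))" using rc b by (simp add: continuous_within)
  have l: "((\<lambda>s. (s+b)/2) \<longlongrightarrow> b/2) (at_right (0::real))"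
    by (rule tendsto_eq_intros) (auto intro!: tendsto_eq_intros)
  have "filterlim (\<lambda>s. (s+b)/2) (at_right (b/2)) (at_right (0::real))"
    using l by (rule tendsto_imp_filterlim_at_right)
       (auto intro: eventually_mono[OF eventually_at_right_less])
  then have h2: "((\<lambda>s. f ((s+b)/2)) \<longlongrightarrow> f (b/2)) (at_right 0)"
    using filterlim_compose[OF h2'] by blast
  show "((\<lambda>s. Delta f s ((s+b)/2) b) \<longlongrightarrow> Delta f 0 ((0+b)/2) b) (at_right 0)"
    unfolding Delta_def using h1 h2 by (auto intro!: tendsto_intros)
  show "\<forall>\<^sub>F s in at_right 0. Delta f s ((s + b) / 2) b \<le> w * (b - s) powr \<mu>"
    unfolding eventually_at_right_field using b by (intro exI[of _ b]) (auto intro!: midp)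
qed

theorem lemma2:
  fixes f :: "real \<Rightarrow> 'a::polish_space" and \<mu> :: real
  assumes "0 < \<mu>" and "\<mu> < 1" and "f \<in> holder_D \<mu>"
  shows "wedge_semi \<mu> f \<le> holder_semi \<mu> f
       \<and> holder_semi \<mu> f \<le> 2 * tilde_semi \<mu> f
       \<and> 2 * tilde_semi \<mu> f \<le> ereal (2 / (1 - 2 powr (- \<mu>))) * wedge_semi \<mu> f"
proof (intro conjI)
  have rc: "\<forall>t\<in>{0..<1}. continuous (at_right t) f"
    using assms(3) by (simp add: holder_D_def cadlag_def)
  have D0: "0 \<le> Delta f s t u" for s t u by (simp add: Delta_def)
  show "wedge_semi \<mu> f \<le> holder_semi \<mu> f"
    unfolding wedge_semi_def holder_semi_def
  proof (rule SUP_least)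
    fix p :: "real \<times> real" assume "p \<in> {(s, u). 0 < s \<and> s < u \<and> u \<le> 1}"
    then obtain s u where p: "p = (s,u)" "0 < s" "s < u" "u \<le> 1" by auto
    have "(s, (s+u)/2, u) \<in> {(s, t, u). 0 \<le> s \<and> s \<le> t \<and> t \<le> u \<and> u \<le> 1 \<and> s < u}"
      using p by auto
    then show "(case p of (s, u) \<Rightarrow> ereal (Delta f s ((s + u) / 2) u / (u - s) powr \<mu>))
        \<le> (SUP (s, t, u)\<in>{(s, t, u). 0 \<le> s \<and> s \<le> t \<and> t \<le> u \<and> u \<le> 1 \<and> s < u}.
             ereal (Delta f s t u / (u - s) powr \<mu>))"
      unfolding p by (rule SUP_upper2) simp
  qed
  have H_T: "holder_semi \<mu> f \<le> tilde_semi \<mu> f"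
    unfolding holder_semi_def
  proof (rule SUP_least)
    fix p :: "real \<times> real \<times> real" assume "p \<in> {(s, t, u). 0 \<le> s \<and> s \<le> t \<and> t \<le> u \<and> u \<le> 1 \<and> s < u}"
    then obtain s t u where p: "p = (s,t,u)" "0 \<le> s" "s \<le> t" "t \<le> u" "u \<le> 1" "s < u" by auto
    have "ereal (Delta f s t u) \<le> Nint f s u"
      unfolding Nint_def
    proof (rule INF_greatest)
      fix \<theta> assume th: "\<theta> \<in> {s<..u}"
      show "ereal (Delta f s t u) \<le> (SUP (s', u')\<in>{s..<\<theta>} \<times> {\<theta>..u}. ereal (max (dist (f s) (f s')) (dist (f u') (f u))))"
      proof (cases "t < \<theta>")
        case True
        then have "(t, u) \<in> {s..<\<theta>} \<times> {\<theta>..u}" using th p by auto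
        then show ?thesis by (rule SUP_upper2) (simp add: Delta_def)
      next
        case False
        then have "(s, t) \<in> {s..<\<theta>} \<times> {\<theta>..u}" using th p by auto
        then show ?thesis by (rule SUP_upper2) (simp add: Delta_def)
      qed
    qed
    also have "\<dots> \<le> Neta f (u - s)"
      unfolding Neta_def using p by (intro SUP_upper2[of "(s,u)"]) auto
    finally have 1: "ereal (Delta f s t u) \<le> Neta f (u - s)" .
    have pp: "0 < (u - s) powr \<mu>" using p by simp
    have "ereal (Delta f s t u / (u - s) powr \<mu>) = ereal (Delta f s t u) / ereal ((u - s) powr \<mu>)"
      using pp by simp
    also have "\<dots> \<le> Neta f (u - s) / ereal ((u - s) powr \<mu>)"
      using 1 pp by (intro ereal_divide_right_mono) auto
    also have "\<dots> \<le> tilde_semi \<mu> f"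
      unfolding tilde_semi_def using p by (intro SUP_upper2[of "u - s"]) auto
    finally show "(case p of (s, t, u) \<Rightarrow> ereal (Delta f s t u / (u - s) powr \<mu>)) \<le> tilde_semi \<mu> f"
      unfolding p by simp
  qed
  have H0: "0 \<le> holder_semi \<mu> f"
    unfolding holder_semi_def
    by (rule SUP_upper2[of "(0,0,1)"]) (auto simp: D0)
  show "holder_semi \<mu> f \<le> 2 * tilde_semi \<mu> f"
  proof -
    have T0: "0 \<le> tilde_semi \<mu> f" using H0 H_T by simp
    have "tilde_semi \<mu> f \<le> 2 * tilde_semi \<mu> f" using T0
      by (cases "tilde_semi \<mu> f") auto
    then show ?thesis using H_T by simp
  qed
  have W0: "0 \<le> wedge_semi \<mu> f"
    unfolding wedge_semi_def
    by (rule SUP_upper2[of "(1/2,1)"]) (auto simp: D0)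
  have cpos: "0 < 2 / (1 - 2 powr (- \<mu>))" using two_powr_lt[OF assms(1)] by simp
  show "2 * tilde_semi \<mu> f \<le> ereal (2 / (1 - 2 powr (- \<mu>))) * wedge_semi \<mu> f"
  proof (cases "wedge_semi \<mu> f")
    case PInf
    define c where "c = 2 / (1 - 2 powr (- \<mu>))"
    have "0 < c" using cpos c_def by simp
    then have "ereal c * \<infinity> = \<infinity>" by simp
    then show ?thesis unfolding c_def[symmetric] PInf by simp
  next
    case MInf
    then show ?thesis using W0 by simp
  next
    case (real w)
    have w0: "0 \<le> w" using W0 real by simp
    have midp: "Delta f a ((a+b)/2) b \<le> w * (b-a) powr \<mu>" if "0 < a" "a < b" "b \<le> 1" for a b
    proof -
      have "ereal (Delta f a ((a+b)/2) b / (b-a) powr \<mu>) \<le> wedge_semi \<mu> f"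
        unfolding wedge_semi_def using that by (intro SUP_upper2[of "(a,b)"]) auto
      then have "Delta f a ((a+b)/2) b / (b-a) powr \<mu> \<le> w" using real by simp
      then show ?thesis using that by (simp add: pos_divide_le_eq)
    qed
    have mid: "Delta f a ((a+b)/2) b \<le> w * (b-a) powr \<mu>" if "0 \<le> a" "a < b" "b \<le> 1" for a b
    proof (cases "a = 0")
      case True
      then show ?thesis using mid0[OF rc midp, of b] that by auto
    next
      case False
      then show ?thesis using midp that by auto
    qed
    have T: "tilde_semi \<mu> f \<le> ereal (w / (1 - 2 powr (- \<mu>)))"
      unfolding tilde_semi_def
    proof (rule SUP_least)
      fix \<eta> :: real assume eta: "\<eta> \<in> {0<..}"
      have pe: "0 < \<eta> powr \<mu>" using eta by simp
      have "Neta f \<eta> \<le> ereal (SS \<mu> w \<eta>)"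
        unfolding Neta_def
      proof (rule SUP_least)
        fix p :: "real \<times> real" assume "p \<in> {(\<sigma>, \<tau>). 0 \<le> \<sigma> \<and> \<sigma> < \<tau> \<and> \<tau> \<le> 1 \<and> \<tau> - \<sigma> \<le> \<eta>}"
        then obtain \<sigma> \<tau> where p: "p = (\<sigma>, \<tau>)" "0 \<le> \<sigma>" "\<sigma> < \<tau>" "\<tau> \<le> 1" "\<tau> - \<sigma> \<le> \<eta>" by auto
        have "Nint f \<sigma> \<tau> \<le> ereal (SS \<mu> w (\<tau> - \<sigma>))"
          by (rule Nint_bound[OF rc mid assms(1) w0 p(2-4)])
        also have "\<dots> \<le> ereal (SS \<mu> w \<eta>)"
          using SS_mono[OF assms(1) w0, of "\<tau> - \<sigma>" \<eta>] p by simp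
        finally show "(case p of (\<sigma>, \<tau>) \<Rightarrow> Nint f \<sigma> \<tau>) \<le> ereal (SS \<mu> w \<eta>)" unfolding p by simp
      qed
      then have "Neta f \<eta> / ereal (\<eta> powr \<mu>) \<le> ereal (SS \<mu> w \<eta>) / ereal (\<eta> powr \<mu>)"
        using pe by (intro ereal_divide_right_mono) auto
      also have "\<dots> = ereal (w / (1 - 2 powr (- \<mu>)))"
        using pe by (simp add: SS_def)
      finally show "Neta f \<eta> / ereal (\<eta> powr \<mu>) \<le> ereal (w / (1 - 2 powr (- \<mu>)))" .
    qed
    have "2 * tilde_semi \<mu> f \<le> 2 * ereal (w / (1 - 2 powr (- \<mu>)))"
      using T by (intro ereal_mult_left_mono) auto
    also have "\<dots> = ereal (2 / (1 - 2 powr (- \<mu>))) * wedge_semi \<mu> f"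
      using real by simp
    finally show ?thesis .
  qed
qed

end
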